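(* Let $q$ be a power of an odd prime, let $t\in\mathbb{F}_q$ be a nonsquare, and let $d\ge 2$. Let $Q=\{(x,y,tx^2-y^2): x,y\in\mathbb{F}_q\}\subset\mathbb{F}_q^3$ and $R=\{(x,tx^2): x\in\mathbb{F}_q\}\subset\mathbb{F}_q^2$. Define $P_d\subset\mathbb{F}_q^d$ by: $P_d=Q^{d/3}$ (the Cartesian product of $d/3$ copies of $Q$) if $d\equiv0\pmod 3$; $P_d=Q^{(d-1)/3}\times\{0\}$ if $d\equiv1\pmod 3$; $P_d=Q^{(d-2)/3}\times R$ if $d\equiv 2\pmod 3$. Then $|P_d|=q^{\lfloor 2d/3\rfloor}$ and no line in $\mathbb{F}_q^d$ contains more than two points of $P_d$.
   Context: A line in $\mathbb{F}_q^d$ is a set $\{u+rv: r\in\mathbb{F}_q\}$ with $u,v\in\mathbb{F}_q^d$, $v\ne 0$. A nonsquare is an element of $\mathbb{F}_q$ that is not of the form $s^2$ with $s\in\mathbb{F}_q$. *)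

theory Defs
  imports "HOL-Computational_Algebra.Primes" "HOL-Library.Cardinality"
begin

definition cart :: "'a list set \<Rightarrow> 'a list set \<Rightarrow> 'a list set" where
  "cart A B = {u @ v | u v. u \<in> A \<and> v \<in> B}"

definition Qset :: "'a::field \<Rightarrow> 'a list set" where
  "Qset t = {[x, y, t * x^2 - y^2] | x y. True}"

definition Rset :: "'a::field \<Rightarrow> 'a list set" where
  "Rset t = {[x, t * x^2] | x. True}"

fun Qpow :: "'a::field \<Rightarrow> nat \<Rightarrow> 'a list set" where
  "Qpow t 0 = {[]}"
| "Qpow t (Suc k) = cart (Qpow t k) (Qset t)"

definition Pset :: "'a::field \<Rightarrow> nat \<Rightarrow> 'a list set" where
  "Pset t d =
     (if d mod 3 = 0 then Qpow t (d div 3)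
      else if d mod 3 = 1 then cart (Qpow t (d div 3)) {[0]}
      else cart (Qpow t (d div 3)) (Rset t))"

definition line :: "'a::field list \<Rightarrow> 'a list \<Rightarrow> 'a list set" where
  "line u v = {map2 (\<lambda>a b. a + r * b) u v | r. True}"

end

theory Submission
  imports Defs
begin

definition lin :: "'a::field list \<Rightarrow> 'a list \<Rightarrow> 'a \<Rightarrow> 'a list" where
  "lin u v r = map2 (\<lambda>a b. a + r*b) u v"

definition good :: "'a::field list set \<Rightarrow> bool" where
  "good S \<longleftrightarrow> (\<forall>u v r1 r2 r3. length u = length v \<and> r1\<noteq>r2 \<and> r1\<noteq>r3 \<and> r2\<noteq>r3 \<and>
      lin u v r1 \<in> S \<and> lin u v r2 \<in> S \<and> lin u v r3 \<in> S \<longrightarrow> set v \<subseteq> {0})"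

lemma quad3:
  fixes A B C r1 r2 r3 :: "'a::field"
  assumes "r1\<noteq>r2" "r1\<noteq>r3" "r2\<noteq>r3"
    and "A*r1^2+B*r1+C=0" "A*r2^2+B*r2+C=0" "A*r3^2+B*r3+C=0"
  shows "A=0 \<and> B=0"
proof -
  have "(r1-r2)*(A*(r1+r2)+B) = (A*r1^2+B*r1+C) - (A*r2^2+B*r2+C)" by (simp add: algebra_simps power2_eq_square)
  hence "(r1-r2)*(A*(r1+r2)+B) = 0" using assms(4,5) by simp
  hence e1: "A*(r1+r2)+B = 0" using assms(1) by simp
  have "(r1-r3)*(A*(r1+r3)+B) = (A*r1^2+B*r1+C) - (A*r3^2+B*r3+C)" by (simp add: algebra_simps power2_eq_square)
  hence "(r1-r3)*(A*(r1+r3)+B) = 0" using assms(4,6) by simp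
  hence e2: "A*(r1+r3)+B = 0" using assms(2) by simp
  have "A*(r2-r3) = (A*(r1+r2)+B) - (A*(r1+r3)+B)" by (simp add: algebra_simps)
  hence "A*(r2-r3) = 0" using e1 e2 by simp
  hence "A = 0" using assms(3) by simp
  with e1 show ?thesis by simp
qed

lemma good_cart:
  assumes gA: "good A" and gB: "good B" and lenA: "\<forall>w\<in>A. length w = n"
  shows "good (cart A B)"
  unfolding good_def
proof (intro allI impI)
  fix u v :: "'a list" and r1 r2 r3
  assume H: "length u = length v \<and> r1\<noteq>r2 \<and> r1\<noteq>r3 \<and> r2\<noteq>r3 \<and>
      lin u v r1 \<in> cart A B \<and> lin u v r2 \<in> cart A B \<and> lin u v r3 \<in> cart A B"
  have split: "lin (take n u) (take n v) r \<in> A \<and> lin (drop n u) (drop n v) r \<in> B"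
    if "lin u v r \<in> cart A B" for r
  proof -
    from that obtain w1 w2 where w: "lin u v r = w1 @ w2" "w1\<in>A" "w2\<in>B" by (auto simp: cart_def)
    have ln: "length w1 = n" using w(2) lenA by blast
    have "take n (lin u v r) = lin (take n u) (take n v) r"
      by (simp add: lin_def take_map take_zip)
    moreover have "drop n (lin u v r) = lin (drop n u) (drop n v) r"
      by (simp add: lin_def drop_map drop_zip)
    ultimately show ?thesis using w ln by auto
  qed
  have "set (take n v) \<subseteq> {0}"
    using gA H split unfolding good_def by (metis length_take)
  moreover have "set (drop n v) \<subseteq> {0}"
    using gB H split unfolding good_def by (metis length_drop)
  ultimately show "set v \<subseteq> {0}"
    by (metis append_take_drop_id set_append Un_subset_iff)
qed

lemma good_empty: "good {[]}"
  unfolding good_def lin_def by auto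

lemma good_zero: "good {[0::'a::field]}"
  unfolding good_def
proof (intro allI impI)
  fix u v :: "'a list" and r1 r2 r3
  assume H: "length u = length v \<and> r1\<noteq>r2 \<and> r1\<noteq>r3 \<and> r2\<noteq>r3 \<and>
      lin u v r1 \<in> {[0]} \<and> lin u v r2 \<in> {[0]} \<and> lin u v r3 \<in> {[0]}"
  hence "length (lin u v r1) = 1" by auto
  hence "length u = 1" "length v = 1" using H by (auto simp: lin_def)
  then obtain a b where uv: "u = [a]" "v = [b]"
    by (metis One_nat_def length_0_conv length_Suc_conv)
  have "a + r1*b = 0" "a + r2*b = 0" using H uv by (auto simp: lin_def)
  moreover have "(r1-r2)*b = (a + r1*b) - (a + r2*b)" by (simp add: algebra_simps)
  ultimately have "(r1-r2)*b = 0" by simp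
  hence "b = 0" using H by simp
  thus "set v \<subseteq> {0}" using uv by simp
qed

lemma t_nz: assumes "\<not> (\<exists>s. t = s^2)" shows "(t::'a::field) \<noteq> 0"
  using assms by (metis power2_eq_square mult_zero_left)

lemma nonsq: fixes t b e :: "'a::field"
  assumes "\<not> (\<exists>s. t = s^2)" "t*b^2 = e^2" shows "b = 0"
proof (rule ccontr)
  assume "b \<noteq> 0"
  hence "t = (e/b)^2" using assms(2) by (simp add: power_divide field_simps)
  thus False using assms(1) by blast
qed

lemma good_R: assumes "\<not> (\<exists>s. t = s^2)" shows "good (Rset (t::'a::field))"
  unfolding good_def
proof (intro allI impI)
  fix u v :: "'a list" and r1 r2 r3
  assume H: "length u = length v \<and> r1\<noteq>r2 \<and> r1\<noteq>r3 \<and> r2\<noteq>r3 \<and>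
      lin u v r1 \<in> Rset t \<and> lin u v r2 \<in> Rset t \<and> lin u v r3 \<in> Rset t"
  hence "length (lin u v r1) = 2" by (auto simp: Rset_def)
  hence "length u = 2" "length v = 2" using H by (auto simp: lin_def)
  then obtain a f b g where uv: "u = [a,f]" "v = [b,g]"
    by (fastforce simp: numeral_2_eq_2 length_Suc_conv)
  have eq: "(t*b^2)*r^2 + (2*t*a*b - g)*r + (t*a^2 - f) = 0" if "lin u v r \<in> Rset t" for r
  proof -
    have "lin u v r = [a+r*b, f+r*g]" by (simp add: lin_def uv)
    hence "f + r*g = t*(a+r*b)^2" using that unfolding Rset_def by auto
    moreover have "(t*b^2)*r^2 + (2*t*a*b - g)*r + (t*a^2 - f) = t*(a+r*b)^2 - (f + r*g)" by algebra
    ultimately show ?thesis by simp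
  qed
  have HH: "r1\<noteq>r2" "r1\<noteq>r3" "r2\<noteq>r3" "lin u v r1 \<in> Rset t" "lin u v r2 \<in> Rset t" "lin u v r3 \<in> Rset t"
    using H by blast+
  note qq = quad3[OF HH(1-3) eq[OF HH(4)] eq[OF HH(5)] eq[OF HH(6)]]
  have "t*b^2 = 0" "2*t*a*b - g = 0" using qq by blast+
  hence "b = 0" using t_nz[OF assms] by simp
  hence "g = 0" using \<open>2*t*a*b - g = 0\<close> by simp
  thus "set v \<subseteq> {0}" using uv \<open>b=0\<close> by simp
qed

lemma good_Q: assumes "\<not> (\<exists>s. t = s^2)" shows "good (Qset (t::'a::field))"
  unfolding good_def
proof (intro allI impI)
  fix u v :: "'a list" and r1 r2 r3
  assume H: "length u = length v \<and> r1\<noteq>r2 \<and> r1\<noteq>r3 \<and> r2\<noteq>r3 \<and>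
      lin u v r1 \<in> Qset t \<and> lin u v r2 \<in> Qset t \<and> lin u v r3 \<in> Qset t"
  hence "length (lin u v r1) = 3" by (auto simp: Qset_def)
  hence "length u = 3" "length v = 3" using H by (auto simp: lin_def)
  then obtain a c f b e g where uv: "u = [a,c,f]" "v = [b,e,g]"
    by (fastforce simp: numeral_3_eq_3 length_Suc_conv)
  have eq: "(t*b^2 - e^2)*r^2 + (2*t*a*b - 2*c*e - g)*r + (t*a^2 - c^2 - f) = 0"
    if "lin u v r \<in> Qset t" for r
  proof -
    have "lin u v r = [a+r*b, c+r*e, f+r*g]" by (simp add: lin_def uv)
    hence "f + r*g = t*(a+r*b)^2 - (c+r*e)^2" using that unfolding Qset_def by auto
    moreover have "(t*b^2 - e^2)*r^2 + (2*t*a*b - 2*c*e - g)*r + (t*a^2 - c^2 - f) = t*(a+r*b)^2 - (c+r*e)^2 - (f + r*g)" by algebra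
    ultimately show ?thesis by simp
  qed
  have HH: "r1\<noteq>r2" "r1\<noteq>r3" "r2\<noteq>r3" "lin u v r1 \<in> Qset t" "lin u v r2 \<in> Qset t" "lin u v r3 \<in> Qset t"
    using H by blast+
  note qq = quad3[OF HH(1-3) eq[OF HH(4)] eq[OF HH(5)] eq[OF HH(6)]]
  have h1: "t*b^2 - e^2 = 0" and h2: "2*t*a*b - 2*c*e - g = 0" using qq by blast+
  have "b = 0" using nonsq[OF assms] h1 by simp
  hence "e = 0" using h1 by simp
  hence "g = 0" using h2 \<open>b=0\<close> by simp
  thus "set v \<subseteq> {0}" using uv \<open>b=0\<close> \<open>e=0\<close> by simp
qed

lemma Qpow_len: "w \<in> Qpow t k \<Longrightarrow> length w = 3*k"
  by (induction k arbitrary: w) (auto simp: cart_def Qset_def)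

lemma good_Qpow: assumes "\<not> (\<exists>s. t = s^2)" shows "good (Qpow (t::'a::field) k)"
proof (induction k)
  case 0 show ?case by (simp add: good_empty)
next
  case (Suc k)
  have L: "\<forall>w\<in>Qpow t k. length w = 3*k" using Qpow_len by blast
  show ?case using good_cart[OF Suc.IH good_Q[OF assms] L] by simp
qed

lemma good_P: assumes "\<not> (\<exists>s. t = s^2)" shows "good (Pset (t::'a::field) d)"
proof -
  have L: "\<forall>w\<in>Qpow t (d div 3). length w = 3*(d div 3)" using Qpow_len by blast
  show ?thesis unfolding Pset_def
    using good_cart[OF good_Qpow[OF assms] good_zero L] good_cart[OF good_Qpow[OF assms] good_R[OF assms] L]
      good_Qpow[OF assms] by simp
qed

lemma card_cart:
  assumes "finite A" "finite B" "\<forall>w\<in>A. length w = n"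
  shows "card (cart A B) = card A * card B"
proof -
  have e: "cart A B = (\<lambda>(x,y). x@y) ` (A\<times>B)" by (auto simp: cart_def)
  have "inj_on (\<lambda>(x,y). x@y) (A\<times>B)"
    using assms(3) by (auto simp: inj_on_def)
  thus ?thesis unfolding e by (simp add: card_image card_cartesian_product)
qed

lemma fin_cart: "finite A \<Longrightarrow> finite B \<Longrightarrow> finite (cart A B)"
proof -
  assume "finite A" "finite B"
  have e: "cart A B = (\<lambda>(x,y). x@y) ` (A\<times>B)" by (auto simp: cart_def)
  show ?thesis unfolding e using \<open>finite A\<close> \<open>finite B\<close> by simp
qed

lemma card_Q: "card (Qset (t::'a::{field,finite})) = CARD('a)^2"
proof -
  have e: "Qset t = (\<lambda>(x,y). [x,y,t*x^2-y^2]) ` (UNIV \<times> UNIV)" by (auto simp: Qset_def)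
  have "inj_on (\<lambda>(x,y). [x,y,t*x^2-y^2]) (UNIV \<times> (UNIV::'a set))" by (auto simp: inj_on_def)
  thus ?thesis unfolding e by (simp add: card_image card_cartesian_product power2_eq_square)
qed

lemma fin_Q: "finite (Qset (t::'a::{field,finite}))"
proof -
  have e: "Qset t = (\<lambda>(x,y). [x,y,t*x^2-y^2]) ` (UNIV \<times> UNIV)" by (auto simp: Qset_def)
  show ?thesis unfolding e by simp
qed

lemma card_R: "card (Rset (t::'a::{field,finite})) = CARD('a)"
proof -
  have e: "Rset t = (\<lambda>x. [x,t*x^2]) ` UNIV" by (auto simp: Rset_def)
  have "inj (\<lambda>x. [x,t*x^2])" by (auto simp: inj_on_def)
  thus ?thesis unfolding e by (simp add: card_image)
qed

lemma fin_R: "finite (Rset (t::'a::{field,finite}))"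
proof -
  have e: "Rset t = (\<lambda>x. [x,t*x^2]) ` UNIV" by (auto simp: Rset_def)
  show ?thesis unfolding e by simp
qed

lemma Qpow_card: "finite (Qpow (t::'a::{field,finite}) k) \<and> card (Qpow t k) = CARD('a)^(2*k)"
proof (induction k)
  case 0 then show ?case by simp
next
  case (Suc k)
  have L: "\<forall>w\<in>Qpow t k. length w = 3*k" using Qpow_len by blast
  have "card (Qpow t (Suc k)) = card (Qpow t k) * card (Qset t)"
    using card_cart[OF _ fin_Q L] Suc by simp
  also have "\<dots> = CARD('a)^(2*k) * CARD('a)^2" using Suc card_Q by simp
  also have "\<dots> = CARD('a)^(2*Suc k)" by (simp add: power_add power2_eq_square flip: power_mult)
  moreover have "finite (Qpow t (Suc k))" using fin_cart[OF Suc.IH[THEN conjunct1] fin_Q] by simp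
  ultimately show ?case by simp
qed

theorem mainTheorem13:
  fixes t :: "'a::{field, finite}" and d :: nat
  assumes "\<exists>p k. prime p \<and> odd p \<and> k \<ge> 1 \<and> CARD('a) = p ^ k"
    and "\<not> (\<exists>s. t = s^2)"
    and "d \<ge> 2"
  shows "card (Pset t d) = CARD('a) ^ (2 * d div 3) \<and>
         (\<forall>u v. length u = d \<and> length v = d \<and> v \<noteq> replicate d 0 \<longrightarrow>
                card (line u v \<inter> Pset t d) \<le> 2)"
proof
  show "card (Pset t d) = CARD('a) ^ (2 * d div 3)"
  proof -
    have c0: "d mod 3 = 0 \<Longrightarrow> 2*d div 3 = 2*(d div 3)" by presburger
    have c1: "d mod 3 = 1 \<Longrightarrow> 2*d div 3 = 2*(d div 3)" by presburger
    have c2: "d mod 3 = 2 \<Longrightarrow> 2*d div 3 = 2*(d div 3) + 1" by presburger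
    have "d mod 3 = 0 \<or> d mod 3 = 1 \<or> d mod 3 = 2" by presburger
    have L: "\<forall>w\<in>Qpow t (d div 3). length w = 3*(d div 3)" using Qpow_len by blast
    note QC = Qpow_card[of t "d div 3"]
    have m3: "d mod 3 = 0 \<or> d mod 3 = 1 \<or> d mod 3 = 2" by presburger
    thus ?thesis
    proof (elim disjE)
      assume 1: "d mod 3 = 0" thus ?thesis using QC c0 by (simp add: Pset_def)
    next
      assume 2: "d mod 3 = 1"
      have "card (cart (Qpow t (d div 3)) {[0]}) = card (Qpow t (d div 3)) * card {[0::'a]}"
        using card_cart[OF conjunct1[OF QC] _ L] by simp
      thus ?thesis using 2 QC c1 by (simp add: Pset_def)
    next
      assume 3: "d mod 3 = 2"
      have "card (cart (Qpow t (d div 3)) (Rset t)) = card (Qpow t (d div 3)) * card (Rset t)"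
        using card_cart[OF conjunct1[OF QC] fin_R L] by simp
      thus ?thesis using 3 QC c2 card_R by (simp add: Pset_def)
    qed
  qed
  show "\<forall>u v. length u = d \<and> length v = d \<and> v \<noteq> replicate d 0 \<longrightarrow>
                card (line u v \<inter> Pset t d) \<le> 2"
  proof (intro allI impI)
    fix u v :: "'a list"
    assume H: "length u = d \<and> length v = d \<and> v \<noteq> replicate d 0"
    have ln: "line u v = range (lin u v)" by (auto simp: line_def lin_def)
    have fin: "finite (line u v \<inter> Pset t d)" unfolding ln by simp
    show "card (line u v \<inter> Pset t d) \<le> 2"
    proof (rule ccontr)
      assume "\<not> ?thesis"
      hence c3: "3 \<le> card (line u v \<inter> Pset t d)" by simp
      obtain S where S: "S \<subseteq> line u v \<inter> Pset t d" "card S = 3"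
        using obtain_subset_with_card_n[OF c3] by metis
      then obtain x y z where xyz: "S = {x,y,z}" "x\<noteq>y" "x\<noteq>z" "y\<noteq>z"
        unfolding card_3_iff by blast
      obtain r1 where r1: "x = lin u v r1" using S xyz ln by auto
      obtain r2 where r2: "y = lin u v r2" using S xyz ln by auto
      obtain r3 where r3: "z = lin u v r3" using S xyz ln by auto
      have G: "good (Pset t d)" using good_P[OF assms(2)] .
      have m: "lin u v r1 \<in> Pset t d" "lin u v r2 \<in> Pset t d" "lin u v r3 \<in> Pset t d"
        using S xyz r1 r2 r3 by auto
      have dr: "r1 \<noteq> r2" "r1 \<noteq> r3" "r2 \<noteq> r3" using xyz r1 r2 r3 by auto
      have "set v \<subseteq> {0}"
        using G[unfolded good_def, rule_format, of u v r1 r2 r3] m dr H by simp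
      hence "v = replicate d 0" using H by (intro replicate_eqI) auto
      thus False using H by simp
    qed
  qed
qed

end
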